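(* Let $0<\epsilon\le1/4$, let $f,g\in\mathcal H_{(d)}$ be nonzero and $x,y\in\mathbb C^{n+1}$ nonzero, with $u\le\epsilon/5$, $v\le\epsilon/5$ and $\operatorname{rank}Df(x)|_{x^\perp}=n$. Then $\operatorname{rank}Dg(y)|_{y^\perp}=n$ and $(1-\epsilon)\mu(g,y)\le\mu(f,x)\le(1+\epsilon)\mu(g,y)$.
   Context: $n\ge2$, $(d)=(d_1,\dots,d_n)$, $D=\max_i d_i\ge2$. $\mathcal H_{(d)}$: systems of $n$ homogeneous polynomials in $n+1$ complex variables of degrees $d_i$, with the Bombieri–Weyl inner product $\langle f,g\rangle=\sum_i\sum_{|\alpha|=d_i}\frac{\alpha_0!\cdots\alpha_n!}{d_i!}f_{i,\alpha}\overline{g_{i,\alpha}}$ and its norm. $x^\perp$ is the Hermitian orthogonal complement of $x$. $\mu(f,x)=\|f\|\,\|(Df(x)|_{x^\perp})^{-1}\mathrm{diag}(\sqrt{d_i}\|x\|^{d_i-1})\|$ (operator norm), $\infty$ if not invertible. $d_R(x,y)\in[0,\pi/2]$ with $\cos d_R(x,y)=|\langle x,y\rangle|/(\|x\|\|y\|)$. $u=\frac{D^{3/2}}{2}\mu(f,x)d_R(x,y)$, $v=D^{1/2}\mu(f,x)\,\big\|\frac{f}{\|f\|}-\frac{g}{\|g\|}\big\|$. *)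

theory Defs
  imports "HOL-Analysis.Analysis"
begin

text \<open>A system f = (f_1,...,f_n) of homogeneous polynomials in the n+1 variables
  indexed by the finite type 'm, equations indexed by the finite type 'k
  (n = CARD('k), n+1 = CARD('m)).  A polynomial system is given by its coefficients:
  F i alpha is the coefficient of the monomial x^alpha in f_i.\<close>

type_synonym ('k, 'm) sys = "'k \<Rightarrow> ('m \<Rightarrow> nat) \<Rightarrow> complex"

definition mons :: "nat \<Rightarrow> ('m::finite \<Rightarrow> nat) set" where
  "mons k = {\<alpha>. sum \<alpha> UNIV = k}"

definition homsys :: "('k \<Rightarrow> nat) \<Rightarrow> ('k, 'm::finite) sys \<Rightarrow> bool" where
  "homsys d F \<longleftrightarrow> (\<forall>i \<alpha>. \<alpha> \<notin> mons (d i) \<longrightarrow> F i \<alpha> = 0)"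

definition peval :: "('k \<Rightarrow> nat) \<Rightarrow> ('k, 'm::finite) sys \<Rightarrow> 'k \<Rightarrow> complex^'m \<Rightarrow> complex" where
  "peval d F i x = (\<Sum>\<alpha>\<in>mons (d i). F i \<alpha> * (\<Prod>j\<in>UNIV. (x$j) ^ (\<alpha> j)))"

definition bwnorm :: "('k::finite \<Rightarrow> nat) \<Rightarrow> ('k, 'm::finite) sys \<Rightarrow> real" where
  "bwnorm d F = sqrt (\<Sum>i\<in>UNIV. \<Sum>\<alpha>\<in>mons (d i).
      (\<Prod>j\<in>UNIV. fact (\<alpha> j)) / fact (d i) * (cmod (F i \<alpha>))\<^sup>2)"

definition Dmat :: "('k \<Rightarrow> nat) \<Rightarrow> ('k, 'm::finite) sys \<Rightarrow> complex^'m \<Rightarrow> 'k \<Rightarrow> 'm \<Rightarrow> complex" where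
  "Dmat d F x i j = deriv (\<lambda>t. peval d F i (\<chi> k. if k = j then t else x$k)) (x$j)"

definition Dlin :: "('k::finite \<Rightarrow> nat) \<Rightarrow> ('k, 'm::finite) sys \<Rightarrow> complex^'m \<Rightarrow> complex^'m \<Rightarrow> complex^'k" where
  "Dlin d F x v = (\<chi> i. \<Sum>j\<in>UNIV. Dmat d F x i j * v$j)"

definition hinner :: "complex^'m::finite \<Rightarrow> complex^'m \<Rightarrow> complex" where
  "hinner x y = (\<Sum>j\<in>UNIV. x$j * cnj (y$j))"

definition xperp :: "complex^'m::finite \<Rightarrow> (complex^'m) set" where
  "xperp x = {v. hinner v x = 0}"

text \<open>rank (Df(x) restricted to x-perp) = n, i.e. the restricted map, whose
  codomain is C^n, has full rank n: its image is all of C^n.\<close>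
definition full_rank :: "('k::finite \<Rightarrow> nat) \<Rightarrow> ('k, 'm::finite) sys \<Rightarrow> complex^'m \<Rightarrow> bool" where
  "full_rank d F x \<longleftrightarrow> Dlin d F x ` xperp x = UNIV"

definition mu :: "('k::finite \<Rightarrow> nat) \<Rightarrow> ('k, 'm::finite) sys \<Rightarrow> complex^'m \<Rightarrow> ereal" where
  "mu d F x = (if full_rank d F x \<and> inj_on (Dlin d F x) (xperp x)
     then ereal (bwnorm d F * onorm (\<lambda>w::complex^'k.
        inv_into (xperp x) (Dlin d F x)
          (\<chi> i. complex_of_real (sqrt (real (d i)) * norm x ^ (d i - 1)) * w$i)))
     else \<infinity>)"

definition dR :: "complex^'m::finite \<Rightarrow> complex^'m \<Rightarrow> real" where
  "dR x y = arccos (cmod (hinner x y) / (norm x * norm y))"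

definition Dmax :: "('k::finite \<Rightarrow> nat) \<Rightarrow> nat" where
  "Dmax d = Max (range d)"

definition nrmdiff :: "('k::finite \<Rightarrow> nat) \<Rightarrow> ('k, 'm::finite) sys \<Rightarrow> ('k, 'm) sys \<Rightarrow> real" where
  "nrmdiff d F G = bwnorm d (\<lambda>i \<alpha>. F i \<alpha> / complex_of_real (bwnorm d F)
                                   - G i \<alpha> / complex_of_real (bwnorm d G))"

end

theory Submission
  imports Defs
begin

definition ev :: "nat \<Rightarrow> (('m::finite \<Rightarrow> nat) \<Rightarrow> complex) \<Rightarrow> complex^'m \<Rightarrow> complex" where
  "ev k p x = (\<Sum>\<alpha>\<in>mons k. p \<alpha> * (\<Prod>j\<in>UNIV. (x$j) ^ (\<alpha> j)))"

definition pd :: "'m \<Rightarrow> (('m \<Rightarrow> nat) \<Rightarrow> complex) \<Rightarrow> (('m \<Rightarrow> nat) \<Rightarrow> complex)" where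
  "pd j p = (\<lambda>\<beta>. of_nat (\<beta> j + 1) * p (\<beta>(j := \<beta> j + 1)))"

definition bw :: "nat \<Rightarrow> (('m::finite \<Rightarrow> nat) \<Rightarrow> complex) \<Rightarrow> real" where
  "bw k p = (\<Sum>\<alpha>\<in>mons k. (\<Prod>j\<in>UNIV. fact (\<alpha> j)) / fact k * (cmod (p \<alpha>))\<^sup>2)"

lemma finite_mons: "finite (mons k :: ('m::finite \<Rightarrow> nat) set)"
proof -
  have "mons k \<subseteq> PiE (UNIV::'m set) (\<lambda>_. {..k})"
    by (auto simp: mons_def PiE_def extensional_def Pi_def intro!: member_le_sum)
  moreover have "finite (PiE (UNIV::'m set) (\<lambda>_. {..k}))"
    by (rule finite_PiE) auto
  ultimately show ?thesis by (rule finite_subset)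
qed

lemma mons0: "mons 0 = {(\<lambda>_. 0) :: 'm::finite \<Rightarrow> nat}"
  by (auto simp: mons_def fun_eq_iff)

lemma bw_nonneg: "bw k p \<ge> 0"
  unfolding bw_def by (intro sum_nonneg mult_nonneg_nonneg divide_nonneg_nonneg prod_nonneg) auto

lemma sum_upd: "sum (\<beta>(j := v)) (UNIV::'m::finite set) + \<beta> j = sum \<beta> UNIV + (v::nat)"
proof -
  have "sum (\<beta>(j := v)) UNIV = v + sum (\<beta>(j := v)) (UNIV - {j})"
    by (subst sum.remove[of UNIV j]) auto
  also have "sum (\<beta>(j := v)) (UNIV - {j}) = sum \<beta> (UNIV - {j})"
    by (rule sum.cong) auto
  moreover have "sum \<beta> UNIV = \<beta> j + sum \<beta> (UNIV - {j})"
    by (subst sum.remove[of UNIV j]) auto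
  ultimately show ?thesis by simp
qed

lemma prod_upd: "(\<Prod>l\<in>(UNIV::'m::finite set). g l ((\<beta>(j := v)) l)) = g j v * (\<Prod>l\<in>UNIV-{j}. g l (\<beta> l))"
proof -
  have "(\<Prod>l\<in>(UNIV::'m set). g l ((\<beta>(j := v)) l)) = g j v * (\<Prod>l\<in>UNIV-{j}. g l ((\<beta>(j := v)) l))"
    by (subst prod.remove[of UNIV j]) auto
  also have "(\<Prod>l\<in>UNIV-{j}. g l ((\<beta>(j := v)) l)) = (\<Prod>l\<in>UNIV-{j}. g l (\<beta> l))"
    by (rule prod.cong) auto
  finally show ?thesis .
qed

lemma prod_split: "(\<Prod>l\<in>(UNIV::'m::finite set). g l) = g j * (\<Prod>l\<in>UNIV-{j}. g l)"
  by (subst prod.remove[of UNIV j]) auto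

lemma sum_mons_shift:
  fixes H :: "('m::finite \<Rightarrow> nat) \<Rightarrow> 'a::comm_monoid_add" and j :: 'm
  assumes "\<And>\<alpha>. \<alpha> j = 0 \<Longrightarrow> H \<alpha> = 0"
  shows "(\<Sum>\<beta>\<in>mons m. H (\<beta>(j := \<beta> j + 1))) = (\<Sum>\<alpha>\<in>mons (Suc m). H \<alpha>)"
proof -
  have "(\<Sum>\<alpha>\<in>mons (Suc m). H \<alpha>) = (\<Sum>\<alpha>\<in>{\<alpha>\<in>mons (Suc m). \<alpha> j \<noteq> 0}. H \<alpha>)"
    by (rule sum.mono_neutral_right) (auto simp: finite_mons assms)
  also have "\<dots> = (\<Sum>\<beta>\<in>mons m. H (\<beta>(j := \<beta> j + 1)))"
  proof -
    have m1: "a(j := a j - 1) \<in> mons m" if a: "a \<in> mons (Suc m)" "a j \<noteq> 0" for a :: "'m \<Rightarrow> nat"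
    proof -
      have "sum (a(j := a j - 1)) UNIV + a j = sum a UNIV + (a j - 1)" by (rule sum_upd)
      with a show ?thesis by (auto simp: mons_def)
    qed
    have m2: "b(j := b j + 1) \<in> mons (Suc m)" if b: "b \<in> mons m" for b :: "'m \<Rightarrow> nat"
    proof -
      have "sum (b(j := b j + 1)) UNIV + b j = sum b UNIV + (b j + 1)" by (rule sum_upd)
      with b show ?thesis by (auto simp: mons_def)
    qed
    have e1: "(a(j := a j - 1))(j := (a(j := a j - 1)) j + 1) = a" if "a j \<noteq> 0" for a :: "'m \<Rightarrow> nat"
      using that by (auto simp: fun_eq_iff)
    show ?thesis
      apply (rule sum.reindex_bij_witness[where i="\<lambda>\<beta>. \<beta>(j := \<beta> j + 1)" and j="\<lambda>\<alpha>. \<alpha>(j := \<alpha> j - 1)"])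
      subgoal for a using e1[of a] by simp
      subgoal for a using m1[of a] by simp
      subgoal for b by (simp add: fun_eq_iff)
      subgoal for b using m2[of b] by simp
      subgoal for a using e1[of a] by simp
      done
  qed
  finally show ?thesis by simp
qed

lemma euler_term:
  fixes y :: "complex^'m::finite"
  shows   "y$j * ev m (pd j p) y = (\<Sum>\<alpha>\<in>mons (Suc m). of_nat (\<alpha> j) * p \<alpha> * (\<Prod>l\<in>UNIV. (y$l) ^ (\<alpha> l)))"
proof -
  have "y$j * ev m (pd j p) y = (\<Sum>\<beta>\<in>mons m. (\<lambda>\<alpha>. of_nat (\<alpha> j) * p \<alpha> * (\<Prod>l\<in>UNIV. (y$l) ^ (\<alpha> l))) (\<beta>(j := \<beta> j + 1)))"
    unfolding ev_def pd_def sum_distrib_left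
  proof (rule sum.cong[OF refl])
    fix \<beta> :: "'m \<Rightarrow> nat" assume "\<beta> \<in> mons m"
    have "(\<Prod>l\<in>UNIV. (y$l) ^ ((\<beta>(j := \<beta> j + 1)) l)) = y$j ^ (\<beta> j + 1) * (\<Prod>l\<in>UNIV-{j}. (y$l) ^ (\<beta> l))"
      by (rule prod_upd)
    moreover have "(\<Prod>l\<in>UNIV. (y$l) ^ (\<beta> l)) = y$j ^ (\<beta> j) * (\<Prod>l\<in>UNIV-{j}. (y$l) ^ (\<beta> l))"
      by (rule prod_split)
    ultimately show "y $ j * (of_nat (\<beta> j + 1) * p (\<beta>(j := \<beta> j + 1)) * (\<Prod>l\<in>UNIV. y $ l ^ \<beta> l)) =
         of_nat ((\<beta>(j := \<beta> j + 1)) j) * p (\<beta>(j := \<beta> j + 1)) * (\<Prod>l\<in>UNIV. y $ l ^ (\<beta>(j := \<beta> j + 1)) l)"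
      by (simp add: algebra_simps)
  qed
  also have "\<dots> = (\<Sum>\<alpha>\<in>mons (Suc m). of_nat (\<alpha> j) * p \<alpha> * (\<Prod>l\<in>UNIV. (y$l) ^ (\<alpha> l)))"
    by (rule sum_mons_shift) simp
  finally show ?thesis .
qed

lemma euler: fixes y :: "complex^'m::finite" shows "(\<Sum>j\<in>UNIV. y$j * ev m (pd j p) y) = of_nat (Suc m) * ev (Suc m) p y"
proof -
  have "(\<Sum>j\<in>UNIV. y$j * ev m (pd j p) y) =
      (\<Sum>\<alpha>\<in>mons (Suc m). (\<Sum>j\<in>UNIV. of_nat (\<alpha> j)) * p \<alpha> * (\<Prod>l\<in>UNIV. (y$l) ^ (\<alpha> l)))"
    by (simp add: euler_term sum.swap[of _ UNIV] sum_distrib_right)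
  also have "\<dots> = (\<Sum>\<alpha>\<in>mons (Suc m). of_nat (Suc m) * (p \<alpha> * (\<Prod>l\<in>UNIV. (y$l) ^ (\<alpha> l))))"
    by (rule sum.cong) (auto simp: mons_def of_nat_sum[symmetric])
  finally show ?thesis by (simp add: ev_def sum_distrib_left)
qed

lemma bw_term:
  fixes p :: "('m::finite \<Rightarrow> nat) \<Rightarrow> complex"
  shows   "bw m (pd j p) = (\<Sum>\<alpha>\<in>mons (Suc m). (\<Prod>l\<in>UNIV. fact (\<alpha> l)) * real (\<alpha> j) / fact m * (cmod (p \<alpha>))\<^sup>2)"
proof -
  have "bw m (pd j p) = (\<Sum>\<beta>\<in>mons m. (\<lambda>\<alpha>. (\<Prod>l\<in>UNIV. fact (\<alpha> l)) * real (\<alpha> j) / fact m * (cmod (p \<alpha>))\<^sup>2) (\<beta>(j := \<beta> j + 1)))"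
    unfolding bw_def pd_def
  proof (rule sum.cong[OF refl])
    fix \<beta> :: "'m \<Rightarrow> nat" assume "\<beta> \<in> mons m"
    have "(\<Prod>l\<in>UNIV. (fact ((\<beta>(j := \<beta> j + 1)) l)::real)) = fact (\<beta> j + 1) * (\<Prod>l\<in>UNIV-{j}. fact (\<beta> l))"
      by (rule prod_upd)
    moreover have "(\<Prod>l\<in>UNIV. (fact (\<beta> l)::real)) = fact (\<beta> j) * (\<Prod>l\<in>UNIV-{j}. fact (\<beta> l))"
      by (rule prod_split)
    ultimately show "(\<Prod>l\<in>UNIV. fact (\<beta> l)) / fact m * (cmod (of_nat (\<beta> j + 1) * p (\<beta>(j := \<beta> j + 1))))\<^sup>2 =
      (\<Prod>l\<in>UNIV. fact ((\<beta>(j := \<beta> j + 1)) l)) * real ((\<beta>(j := \<beta> j + 1)) j) / fact m * (cmod (p (\<beta>(j := \<beta> j + 1))))\<^sup>2"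
      by (simp add: norm_mult power_mult_distrib power2_eq_square algebra_simps del: of_nat_Suc)
  qed
  also have "\<dots> = (\<Sum>\<alpha>\<in>mons (Suc m). (\<Prod>l\<in>UNIV. fact (\<alpha> l)) * real (\<alpha> j) / fact m * (cmod (p \<alpha>))\<^sup>2)"
    by (rule sum_mons_shift) simp
  finally show ?thesis .
qed

lemma bw_pd: fixes p :: "('m::finite \<Rightarrow> nat) \<Rightarrow> complex" shows "(\<Sum>j\<in>UNIV. bw m (pd j p)) = (real (Suc m))^2 * bw (Suc m) p"
proof -
  have "(\<Sum>j\<in>UNIV. bw m (pd j p)) =
      (\<Sum>\<alpha>\<in>mons (Suc m). (\<Prod>l\<in>UNIV. fact (\<alpha> l)) * (\<Sum>j\<in>UNIV. real (\<alpha> j)) / fact m * (cmod (p \<alpha>))\<^sup>2)"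
    by (simp add: bw_term sum.swap[of _ UNIV] sum_distrib_right sum_distrib_left sum_divide_distrib)
  also have "\<dots> = (\<Sum>\<alpha>\<in>mons (Suc m). (real (Suc m))^2 * ((\<Prod>l\<in>UNIV. fact (\<alpha> l)) / fact (Suc m) * (cmod (p \<alpha>))\<^sup>2))"
  proof (rule sum.cong[OF refl])
    fix \<alpha> :: "'m \<Rightarrow> nat" assume a: "\<alpha> \<in> mons (Suc m)"
    then have "(\<Sum>j\<in>UNIV. real (\<alpha> j)) = real (Suc m)" by (simp add: mons_def of_nat_sum[symmetric])
    then show "(\<Prod>l\<in>UNIV. fact (\<alpha> l)) * (\<Sum>j\<in>UNIV. real (\<alpha> j)) / fact m * (cmod (p \<alpha>))\<^sup>2 =
         (real (Suc m))\<^sup>2 * ((\<Prod>l\<in>UNIV. fact (\<alpha> l)) / fact (Suc m) * (cmod (p \<alpha>))\<^sup>2)"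
      by (simp add: power2_eq_square field_simps del: of_nat_Suc)
  qed
  finally show ?thesis by (simp add: bw_def sum_distrib_left)
qed


lemma cs_vec:
  fixes a :: "complex^'m::finite"
  assumes "\<And>j. b j \<ge> 0"
  shows "(\<Sum>j\<in>UNIV. cmod (a$j) * b j) \<le> norm a * sqrt (\<Sum>j\<in>UNIV. (b j)^2)"
proof -
  have "(\<Sum>j\<in>UNIV. cmod (a$j) * b j) = (\<Sum>j\<in>UNIV. \<bar>cmod (a$j)\<bar> * \<bar>b j\<bar>)"
    using assms by simp
  also have "\<dots> \<le> L2_set (\<lambda>j. cmod (a$j)) UNIV * L2_set b UNIV" by (rule L2_set_mult_ineq)
  finally show ?thesis by (simp add: norm_vec_def L2_set_def)
qed

lemma sqrt_bw_pd: "sqrt (\<Sum>j\<in>UNIV. bw m (pd j p)) = real (Suc m) * sqrt (bw (Suc m) (p :: ('m::finite \<Rightarrow> nat) \<Rightarrow> complex))"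
  by (simp add: bw_pd real_sqrt_mult del: of_nat_Suc)

lemma sum_sqrt_sq: "(\<Sum>j\<in>UNIV. (sqrt (bw m (pd j p)))^2) = (\<Sum>j\<in>(UNIV::'m::finite set). bw m (pd j p))"
  by (simp add: bw_nonneg)

lemma ev0: "ev 0 p y = p (\<lambda>_. 0)"
  by (simp add: ev_def mons0)

lemma bw0: "bw 0 p = (cmod (p (\<lambda>_. 0)))^2"
  by (simp add: bw_def mons0)

lemma ev_bound: "cmod (ev k p y) \<le> sqrt (bw k p) * norm (y::complex^'m::finite) ^ k"
proof (induction k arbitrary: p)
  case 0
  then show ?case by (simp add: ev0 bw0)
next
  case (Suc m)
  have "real (Suc m) * cmod (ev (Suc m) p y) = cmod (\<Sum>j\<in>UNIV. y$j * ev m (pd j p) y)"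
    by (simp add: euler norm_mult del: of_nat_Suc)
  also have "\<dots> \<le> (\<Sum>j\<in>UNIV. cmod (y$j) * cmod (ev m (pd j p) y))"
    by (rule order_trans[OF norm_sum]) (simp add: norm_mult)
  also have "\<dots> \<le> (\<Sum>j\<in>UNIV. cmod (y$j) * (sqrt (bw m (pd j p)) * norm y ^ m))"
    by (intro sum_mono mult_left_mono Suc.IH) auto
  also have "\<dots> = (\<Sum>j\<in>UNIV. cmod (y$j) * sqrt (bw m (pd j p))) * norm y ^ m"
    by (simp add: sum_distrib_right mult.assoc)
  also have "\<dots> \<le> (norm y * sqrt (\<Sum>j\<in>UNIV. (sqrt (bw m (pd j p)))^2)) * norm y ^ m"
    by (intro mult_right_mono cs_vec) (auto simp: bw_nonneg)
  also have "\<dots> = real (Suc m) * (sqrt (bw (Suc m) p) * norm y ^ Suc m)"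
    by (simp only: sum_sqrt_sq sqrt_bw_pd) (simp add: algebra_simps)
  finally show ?case by (simp del: of_nat_Suc)
qed

lemma ev_lip:
  fixes x y :: "complex^'m::finite"
  assumes "norm x \<le> r" "norm y \<le> r"
  shows "cmod (ev k p y - ev k p x) \<le> real k * sqrt (bw k p) * r ^ (k - 1) * norm (y - x)"
proof (induction k arbitrary: p)
  case 0
  then show ?case by (simp add: ev0)
next
  case (Suc m)
  have r0: "r \<ge> 0" using assms(1) norm_ge_zero order_trans by blast
  define S where "S = real (Suc m) * sqrt (bw (Suc m) p)"
  have S0: "S \<ge> 0" by (simp add: S_def bw_nonneg)
  have "real (Suc m) * (ev (Suc m) p y - ev (Suc m) p x) =
      (\<Sum>j\<in>UNIV. (y$j - x$j) * ev m (pd j p) y) + (\<Sum>j\<in>UNIV. x$j * (ev m (pd j p) y - ev m (pd j p) x))"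
  proof -
    have "(\<Sum>j\<in>UNIV. (y$j - x$j) * ev m (pd j p) y) + (\<Sum>j\<in>UNIV. x$j * (ev m (pd j p) y - ev m (pd j p) x))
        = (\<Sum>j\<in>UNIV. y$j * ev m (pd j p) y) - (\<Sum>j\<in>UNIV. x$j * ev m (pd j p) x)"
      by (simp add: ring_distribs sum_subtractf)
    then show ?thesis by (simp add: euler right_diff_distrib del: of_nat_Suc)
  qed
  then have "real (Suc m) * cmod (ev (Suc m) p y - ev (Suc m) p x) =
      cmod ((\<Sum>j\<in>UNIV. (y$j - x$j) * ev m (pd j p) y) + (\<Sum>j\<in>UNIV. x$j * (ev m (pd j p) y - ev m (pd j p) x)))"
    by (metis norm_mult norm_of_nat of_real_of_nat_eq)
  also have "\<dots> \<le> cmod (\<Sum>j\<in>UNIV. (y$j - x$j) * ev m (pd j p) y) + cmod (\<Sum>j\<in>UNIV. x$j * (ev m (pd j p) y - ev m (pd j p) x))"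
    by (rule norm_triangle_ineq)
  also have "cmod (\<Sum>j\<in>UNIV. (y$j - x$j) * ev m (pd j p) y) \<le> norm (y - x) * S * r ^ m"
  proof -
    have "cmod (\<Sum>j\<in>UNIV. (y$j - x$j) * ev m (pd j p) y) \<le> (\<Sum>j\<in>UNIV. cmod ((y-x)$j) * cmod (ev m (pd j p) y))"
      by (rule order_trans[OF norm_sum]) (simp add: norm_mult)
    also have "\<dots> \<le> (\<Sum>j\<in>UNIV. cmod ((y-x)$j) * (sqrt (bw m (pd j p)) * r ^ m))"
    proof (intro sum_mono mult_left_mono)
      fix j
      have "cmod (ev m (pd j p) y) \<le> sqrt (bw m (pd j p)) * norm y ^ m" by (rule ev_bound)
      also have "\<dots> \<le> sqrt (bw m (pd j p)) * r ^ m"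
        by (intro mult_left_mono power_mono assms) (auto simp: bw_nonneg)
      finally show "cmod (ev m (pd j p) y) \<le> sqrt (bw m (pd j p)) * r ^ m" .
    qed auto
    also have "\<dots> = (\<Sum>j\<in>UNIV. cmod ((y-x)$j) * sqrt (bw m (pd j p))) * r ^ m"
      by (simp add: sum_distrib_right mult.assoc)
    also have "\<dots> \<le> (norm (y-x) * sqrt (\<Sum>j\<in>UNIV. (sqrt (bw m (pd j p)))^2)) * r ^ m"
      by (intro mult_right_mono cs_vec) (auto simp: r0 bw_nonneg)
    also have "\<dots> = norm (y - x) * S * r ^ m"
      by (simp only: sum_sqrt_sq sqrt_bw_pd S_def)
    finally show ?thesis .
  qed
  also have "cmod (\<Sum>j\<in>UNIV. x$j * (ev m (pd j p) y - ev m (pd j p) x)) \<le> real m * norm (y - x) * S * r ^ m"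
  proof -
    have "cmod (\<Sum>j\<in>UNIV. x$j * (ev m (pd j p) y - ev m (pd j p) x)) \<le> (\<Sum>j\<in>UNIV. cmod (x$j) * cmod (ev m (pd j p) y - ev m (pd j p) x))"
      by (rule order_trans[OF norm_sum]) (simp add: norm_mult)
    also have "\<dots> \<le> (\<Sum>j\<in>UNIV. cmod (x$j) * (sqrt (bw m (pd j p)) * (real m * r ^ (m - 1) * norm (y - x))))"
    proof (intro sum_mono mult_left_mono)
      fix j
      show "cmod (ev m (pd j p) y - ev m (pd j p) x) \<le> sqrt (bw m (pd j p)) * (real m * r ^ (m - 1) * norm (y - x))"
        using Suc.IH[of "pd j p"] by (simp add: algebra_simps)
    qed auto
    also have "\<dots> = (\<Sum>j\<in>UNIV. cmod (x$j) * sqrt (bw m (pd j p))) * (real m * r ^ (m - 1) * norm (y - x))"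
      by (simp add: sum_distrib_right mult.assoc)
    also have "\<dots> \<le> (norm x * sqrt (\<Sum>j\<in>UNIV. (sqrt (bw m (pd j p)))^2)) * (real m * r ^ (m - 1) * norm (y - x))"
      by (intro mult_right_mono cs_vec) (auto simp: r0 bw_nonneg)
    also have "\<dots> = norm x * S * (real m * r ^ (m - 1) * norm (y - x))"
      by (simp only: sum_sqrt_sq sqrt_bw_pd S_def)
    also have "\<dots> \<le> real m * norm (y - x) * S * r ^ m"
    proof (cases m)
      case 0 then show ?thesis by simp
    next
      case (Suc m')
      have "norm x * S * (real m * r ^ m' * norm (y - x)) \<le> r * S * (real m * r ^ m' * norm (y - x))"
        by (intro mult_right_mono assms) (auto simp: S0 r0)
      then show ?thesis using Suc by (simp add: algebra_simps)
    qed
    finally show ?thesis .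
  qed
  finally have "real (Suc m) * cmod (ev (Suc m) p y - ev (Suc m) p x) \<le> real (Suc m) * (S * r ^ m * norm (y - x))"
    by (simp add: algebra_simps)
  then have "cmod (ev (Suc m) p y - ev (Suc m) p x) \<le> S * r ^ m * norm (y - x)"
    by (rule mult_left_le_imp_le) simp
  then show ?case by (simp add: S_def algebra_simps del: of_nat_Suc)
qed

lemma deriv_poly1:
  fixes c :: "'a \<Rightarrow> complex" and e :: "'a \<Rightarrow> nat"
  assumes "finite A"
  shows "deriv (\<lambda>t. \<Sum>\<alpha>\<in>A. c \<alpha> * t ^ (e \<alpha>)) t0 = (\<Sum>\<alpha>\<in>A. c \<alpha> * (of_nat (e \<alpha>) * t0 ^ (e \<alpha> - 1)))"
proof (rule DERIV_imp_deriv)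
  show "((\<lambda>t. \<Sum>\<alpha>\<in>A. c \<alpha> * t ^ (e \<alpha>)) has_field_derivative (\<Sum>\<alpha>\<in>A. c \<alpha> * (of_nat (e \<alpha>) * t0 ^ (e \<alpha> - 1)))) (at t0)"
    by (auto intro!: derivative_eq_intros sum.cong simp: algebra_simps)
qed

lemma Dmat_eq:
  fixes F :: "('k::finite, 'm::finite) sys"
  assumes "d i \<ge> 1"
  shows "Dmat d F x i j = ev (d i - 1) (pd j (F i)) x"
proof -
  define C where "C \<alpha> = (\<Prod>l\<in>UNIV-{j}. (x$l) ^ (\<alpha> l))" for \<alpha> :: "'m \<Rightarrow> nat"
  have "peval d F i (\<chi> k. if k = j then t else x$k) = (\<Sum>\<alpha>\<in>mons (d i). (F i \<alpha> * C \<alpha>) * t ^ (\<alpha> j))" for t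
    unfolding peval_def
  proof (rule sum.cong[OF refl])
    fix \<alpha> :: "'m \<Rightarrow> nat"
    have "(\<Prod>l\<in>UNIV. ((\<chi> k. if k = j then t else x$k)$l) ^ (\<alpha> l)) = ((\<chi> k. if k = j then t else x$k)$j) ^ (\<alpha> j) * (\<Prod>l\<in>UNIV-{j}. ((\<chi> k. if k = j then t else x$k)$l) ^ (\<alpha> l))"
      by (rule prod_split)
    also have "(\<Prod>l\<in>UNIV-{j}. ((\<chi> k. if k = j then t else x$k)$l) ^ (\<alpha> l)) = C \<alpha>"
      unfolding C_def by (rule prod.cong) auto
    finally show "F i \<alpha> * (\<Prod>l\<in>UNIV. ((\<chi> k. if k = j then t else x$k)$l) ^ (\<alpha> l)) = F i \<alpha> * C \<alpha> * t ^ (\<alpha> j)"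
      by simp
  qed
  then have "Dmat d F x i j = deriv (\<lambda>t. \<Sum>\<alpha>\<in>mons (d i). (F i \<alpha> * C \<alpha>) * t ^ (\<alpha> j)) (x$j)"
    unfolding Dmat_def by presburger
  also have "\<dots> = (\<Sum>\<alpha>\<in>mons (d i). (F i \<alpha> * C \<alpha>) * (of_nat (\<alpha> j) * (x$j) ^ (\<alpha> j - 1)))"
    by (rule deriv_poly1) (rule finite_mons)
  also have "\<dots> = (\<Sum>\<alpha>\<in>mons (Suc (d i - 1)). of_nat (\<alpha> j) * F i \<alpha> * ((x$j) ^ (\<alpha> j - 1) * C \<alpha>))"
    using assms by (simp add: algebra_simps)
  also have "\<dots> = (\<Sum>\<beta>\<in>mons (d i - 1). (\<lambda>\<alpha>. of_nat (\<alpha> j) * F i \<alpha> * ((x$j) ^ (\<alpha> j - 1) * C \<alpha>)) (\<beta>(j := \<beta> j + 1)))"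
    by (rule sum_mons_shift[symmetric]) simp
  also have "\<dots> = ev (d i - 1) (pd j (F i)) x"
    unfolding ev_def pd_def
  proof (rule sum.cong[OF refl])
    fix \<beta> :: "'m \<Rightarrow> nat"
    have "C (\<beta>(j := \<beta> j + 1)) = C \<beta>" unfolding C_def by (rule prod.cong) auto
    moreover have "(\<Prod>l\<in>UNIV. (x$l) ^ (\<beta> l)) = (x$j) ^ (\<beta> j) * C \<beta>"
      unfolding C_def by (rule prod_split)
    ultimately show "of_nat ((\<beta>(j := \<beta> j + 1)) j) * F i (\<beta>(j := \<beta> j + 1)) * ((x$j) ^ ((\<beta>(j := \<beta> j + 1)) j - 1) * C (\<beta>(j := \<beta> j + 1)))
       = of_nat (\<beta> j + 1) * F i (\<beta>(j := \<beta> j + 1)) * (\<Prod>l\<in>UNIV. (x$l) ^ (\<beta> l))"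
      by simp
  qed
  finally show ?thesis .
qed

lemma hinner_add_left: "hinner (v + w) z = hinner v z + hinner w z"
  by (simp add: hinner_def ring_distribs sum.distrib)
lemma hinner_diff_left: "hinner (v - w) z = hinner v z - hinner w z"
  by (simp add: hinner_def ring_distribs sum_subtractf)
lemma hinner_add_right: "hinner z (v + w) = hinner z v + hinner z w"
  by (simp add: hinner_def ring_distribs sum.distrib)
lemma hinner_diff_right: "hinner z (v - w) = hinner z v - hinner z w"
  by (simp add: hinner_def ring_distribs sum_subtractf)
lemma hinner_scale_left: "hinner (c *s v) w = c * hinner v w"
  by (simp add: hinner_def sum_distrib_left mult.assoc)
lemma hinner_scale_right: "hinner v (c *s w) = cnj c * hinner v w"
  by (simp add: hinner_def sum_distrib_left algebra_simps)
lemma hinner_commute: "hinner w v = cnj (hinner v w)"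
  by (simp add: hinner_def mult.commute)
lemma hinner_zero_left[simp]: "hinner 0 v = 0"
  by (simp add: hinner_def)

lemma norm_sq_vec: "(norm (v::complex^'m::finite))^2 = (\<Sum>j\<in>UNIV. (cmod (v$j))^2)"
  by (simp add: norm_vec_def L2_set_def sum_nonneg)

lemma mult_cnj_sq: "z * cnj z = complex_of_real ((cmod z)^2)"
  by (rule complex_norm_square[symmetric])

lemma hinner_self: "hinner v v = complex_of_real ((norm (v::complex^'m::finite))^2)"
  by (simp only: hinner_def norm_sq_vec mult_cnj_sq of_real_sum)

lemma Re_hinner: "Re (hinner v w) = inner v (w::complex^'m::finite)"
  by (simp add: hinner_def inner_vec_def inner_complex_def)

lemma norm_smult: "norm (c *s (v::complex^'m::finite)) = cmod c * norm v"
proof -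
  have "(norm (c *s v))^2 = (cmod c * norm v)^2"
    by (simp add: norm_sq_vec norm_mult power_mult_distrib sum_distrib_left)
  then show ?thesis by (simp add: power2_eq_iff_nonneg)
qed

lemma hinner_bound: "cmod (hinner v w) \<le> norm v * norm (w::complex^'m::finite)"
proof (cases "hinner v w = 0")
  case True then show ?thesis by simp
next
  case False
  define c where "c = cnj (hinner v w) / complex_of_real (cmod (hinner v w))"
  have cm: "cmod c = 1" using False by (simp add: c_def norm_divide)
  have e: "cnj (hinner v w) * hinner v w = complex_of_real (cmod (hinner v w)) * complex_of_real (cmod (hinner v w))"
    by (metis mult.commute mult_cnj_sq of_real_mult power2_eq_square)
  have "hinner (c *s v) w = complex_of_real (cmod (hinner v w))"
    using False by (simp add: hinner_scale_left c_def e)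
  then have "cmod (hinner v w) = inner (c *s v) w"
    by (metis Re_complex_of_real Re_hinner)
  also have "\<dots> \<le> norm (c *s v) * norm w" by (rule norm_cauchy_schwarz)
  finally show ?thesis by (simp add: norm_smult cm)
qed

lemma norm_diff_sq: "(norm (v - w))^2 = (norm v)^2 + (norm w)^2 - 2 * Re (hinner v (w::complex^'m::finite))"
proof -
  have "complex_of_real ((norm (v - w))^2) = hinner (v - w) (v - w)" by (simp add: hinner_self)
  also have "\<dots> = hinner v v - hinner v w - cnj (hinner v w) + hinner w w"
    by (simp add: hinner_diff_left hinner_diff_right hinner_commute[of w v])
  also have "\<dots> = hinner v v + hinner w w - (hinner v w + cnj (hinner v w))" by simp
  finally have "complex_of_real ((norm (v - w))^2) = complex_of_real ((norm v)^2) + complex_of_real ((norm w)^2) - complex_of_real (2 * Re (hinner v w))"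
    by (simp only: hinner_self complex_add_cnj)
  then show ?thesis by (metis of_real_add of_real_diff of_real_eq_iff)
qed

lemma cscaleR: "r *\<^sub>R (z::complex) = complex_of_real r * z"
  by (simp add: scaleR_conv_of_real)

lemma scaleR_vec_comp: "(r *\<^sub>R (v::complex^'m)) $ i = complex_of_real r * v $ i"
  by (simp add: cscaleR)

lemma hinner_scaleR_left: "hinner (r *\<^sub>R v) w = complex_of_real r * hinner v w"
  by (simp add: hinner_def cscaleR sum_distrib_left mult.assoc)

lemma Dlin_add: "Dlin d F x (v + w) = Dlin d F x v + Dlin d F x w"
  by (simp add: Dlin_def vec_eq_iff ring_distribs sum.distrib)
lemma Dlin_diff: "Dlin d F x (v - w) = Dlin d F x v - Dlin d F x w"
  by (simp add: Dlin_def vec_eq_iff ring_distribs sum_subtractf)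
lemma Dlin_smult: "Dlin d F x (c *s v) = c *s Dlin d F x v"
  by (simp add: Dlin_def vec_eq_iff sum_distrib_left algebra_simps)
lemma Dlin_scaleR: "Dlin d F x (r *\<^sub>R v) = r *\<^sub>R Dlin d F x v"
  by (simp add: Dlin_def vec_eq_iff sum_distrib_left cscaleR algebra_simps)
lemma Dlin_zero: "Dlin d F x 0 = 0"
  by (simp add: Dlin_def vec_eq_iff)
lemma linear_Dlin: "linear (Dlin d F x)"
  by (rule linearI) (simp_all add: Dlin_add Dlin_scaleR)

definition Lv :: "('k::finite \<Rightarrow> nat) \<Rightarrow> ('k, 'm::finite) sys \<Rightarrow> complex^'m \<Rightarrow> complex^'m \<Rightarrow> complex^'k" where
  "Lv d F x v = (\<chi> i. Dlin d F x v $ i / complex_of_real (sqrt (real (d i)) * norm x ^ (d i - 1)))"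

definition Dg :: "('k::finite \<Rightarrow> nat) \<Rightarrow> complex^'m::finite \<Rightarrow> complex^'k \<Rightarrow> complex^'k" where
  "Dg d x w = (\<chi> i. complex_of_real (sqrt (real (d i)) * norm x ^ (d i - 1)) * w$i)"

lemma Lv_diff: "Lv d F x (v - w) = Lv d F x v - Lv d F x w"
  by (simp add: Lv_def Dlin_diff vec_eq_iff diff_divide_distrib)

lemma Dg_Lv:
  assumes "x \<noteq> 0" "\<forall>i. d i \<ge> 1"
  shows "Dg d x (Lv d F x v) = Dlin d F x v"
proof -
  have "sqrt (real (d i)) * norm x ^ (d i - 1) \<noteq> 0" for i using assms(1) assms(2)[rule_format, of i] by auto
  then show ?thesis by (simp add: Dg_def Lv_def vec_eq_iff)
qed

lemma Lv_Dg:
  assumes "x \<noteq> 0" "\<forall>i. d i \<ge> 1" "Dlin d F x v = Dg d x w"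
  shows "Lv d F x v = w"
proof -
  have "sqrt (real (d i)) * norm x ^ (d i - 1) \<noteq> 0" for i using assms(1) assms(2)[rule_format, of i] by auto
  then show ?thesis using assms(3) by (simp add: Dg_def Lv_def vec_eq_iff)
qed

lemma Dg_add: "Dg d x (a + b) = Dg d x a + Dg d x b"
  by (simp add: Dg_def vec_eq_iff ring_distribs)
lemma Dg_scaleR: "Dg d x (r *\<^sub>R a) = r *\<^sub>R Dg d x a"
  by (simp add: Dg_def vec_eq_iff cscaleR algebra_simps)

lemma xperp_add: "v \<in> xperp x \<Longrightarrow> w \<in> xperp x \<Longrightarrow> v + w \<in> xperp x"
  by (simp add: xperp_def hinner_add_left)
lemma xperp_diff: "v \<in> xperp x \<Longrightarrow> w \<in> xperp x \<Longrightarrow> v - w \<in> xperp x"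
  by (simp add: xperp_def hinner_diff_left)
lemma xperp_scaleR: "v \<in> xperp x \<Longrightarrow> r *\<^sub>R v \<in> xperp x"
  by (simp add: xperp_def hinner_scaleR_left)

definition Pr :: "complex^'m::finite \<Rightarrow> complex^'m \<Rightarrow> complex^'m" where
  "Pr x v = v - (hinner v x / complex_of_real ((norm x)^2)) *s x"

lemma Pr_in: "x \<noteq> 0 \<Longrightarrow> Pr x v \<in> xperp x"
  by (simp add: Pr_def xperp_def hinner_diff_left hinner_scale_left hinner_self)

lemma Pr_id: "v \<in> xperp x \<Longrightarrow> Pr x v = v"
  by (simp add: Pr_def xperp_def)

lemma dims_eq:
  assumes "CARD('m::finite) = CARD('k::finite) + 1"
  shows "dim (UNIV :: ((complex^'k) \<times> complex) set) = dim (UNIV :: (complex^'m) set)"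
  using assms by (simp add: dim_UNIV)

lemma full_rank_iff_inj:
  fixes F :: "('k::finite, 'm::finite) sys"
  assumes card: "CARD('m) = CARD('k) + 1" and x: "x \<noteq> 0"
  shows "full_rank d F x \<longleftrightarrow> inj_on (Dlin d F x) (xperp x)"
proof -
  define \<Psi> where "\<Psi> v = (Dlin d F x (Pr x v), hinner v x)" for v
  have nx: "complex_of_real ((norm x)^2) \<noteq> 0" using x by simp
  have lin: "linear \<Psi>"
  proof (rule linearI)
    fix v w
    show "\<Psi> (v + w) = \<Psi> v + \<Psi> w"
      by (simp add: \<Psi>_def Pr_def hinner_add_left Dlin_add[symmetric] add_divide_distrib vector_add_ldistrib)
        (simp add: algebra_simps)
  next
    fix r :: real and v
    have "Pr x (r *\<^sub>R v) = r *\<^sub>R Pr x v"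
      by (simp add: Pr_def hinner_scaleR_left vec_eq_iff cscaleR algebra_simps)
    then show "\<Psi> (r *\<^sub>R v) = r *\<^sub>R \<Psi> v"
      by (simp add: \<Psi>_def Dlin_scaleR hinner_scaleR_left cscaleR)
  qed
  have decomp: "v = Pr x v + (hinner v x / complex_of_real ((norm x)^2)) *s x" for v
    by (simp add: Pr_def)
  show ?thesis
  proof
    assume fr: "full_rank d F x"
    have "surj \<Psi>"
    proof -
      have "p \<in> range \<Psi>" for p
      proof -
        obtain z c where p: "p = (z, c)" by (cases p)
        obtain w where w: "w \<in> xperp x" "Dlin d F x w = z"
          using fr unfolding full_rank_def by (metis UNIV_I imageE)
        define v where "v = w + (c / complex_of_real ((norm x)^2)) *s x"
        have hv: "hinner v x = c"
          using w(1) nx by (simp add: v_def hinner_add_left hinner_scale_left hinner_self xperp_def)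
        have "Pr x v = w"
          using hv by (simp add: Pr_def v_def)
        then have "\<Psi> v = p" using hv w p by (simp add: \<Psi>_def)
        then show ?thesis by (metis rangeI)
      qed
      then show ?thesis by auto
    qed
    then have injP: "inj \<Psi>" using lin eucl.linear_surjective_imp_injective dims_eq[OF card] by blast
    show "inj_on (Dlin d F x) (xperp x)"
    proof (rule inj_onI)
      fix v w assume "v \<in> xperp x" "w \<in> xperp x" "Dlin d F x v = Dlin d F x w"
      then have "\<Psi> v = \<Psi> w" by (simp add: \<Psi>_def Pr_id xperp_def)
      then show "v = w" using injP by (simp add: inj_eq)
    qed
  next
    assume inj: "inj_on (Dlin d F x) (xperp x)"
    have "inj \<Psi>"
    proof (rule injI)
      fix v w assume e: "\<Psi> v = \<Psi> w"
      then have h: "hinner v x = hinner w x" and "Dlin d F x (Pr x v) = Dlin d F x (Pr x w)"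
        by (auto simp: \<Psi>_def)
      then have "Pr x v = Pr x w" using inj Pr_in[OF x] by (meson inj_onD)
      then show "v = w" using decomp[of v] decomp[of w] h by metis
    qed
    then have s: "surj \<Psi>" using lin eucl.linear_injective_imp_surjective dims_eq[OF card] by blast
    show "full_rank d F x"
      unfolding full_rank_def
    proof (rule set_eqI, rule iffI)
      fix z :: "complex^'k"
      assume "z \<in> UNIV"
      obtain v where "\<Psi> v = (z, 0)" using s by (metis surjD)
      then have "hinner v x = 0" "Dlin d F x (Pr x v) = z" by (auto simp: \<Psi>_def)
      then have "v \<in> xperp x" "Dlin d F x v = z" by (auto simp: xperp_def Pr_id)
      then show "z \<in> Dlin d F x ` xperp x" by blast
    qed simp
  qed
qed

definition Tm :: "('k::finite \<Rightarrow> nat) \<Rightarrow> ('k, 'm::finite) sys \<Rightarrow> complex^'m \<Rightarrow> complex^'k \<Rightarrow> complex^'m" where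
  "Tm d F x w = inv_into (xperp x) (Dlin d F x) (Dg d x w)"

lemma mu_eq:
  "full_rank d F x \<Longrightarrow> inj_on (Dlin d F x) (xperp x) \<Longrightarrow> mu d F x = ereal (bwnorm d F * onorm (Tm d F x))"
  by (simp add: mu_def Tm_def[abs_def] Dg_def)

lemma Tm_props:
  assumes "full_rank d F x"
  shows "Tm d F x w \<in> xperp x" "Dlin d F x (Tm d F x w) = Dg d x w"
  using assms unfolding full_rank_def Tm_def
  by (auto intro: inv_into_into f_inv_into_f)

lemma Tm_linear:
  assumes fr: "full_rank d F x" and inj: "inj_on (Dlin d F x) (xperp x)"
  shows "bounded_linear (Tm d F x)"
proof -
  have "linear (Tm d F x)"
  proof (rule linearI)
    fix a b
    have "Dlin d F x (Tm d F x (a + b)) = Dlin d F x (Tm d F x a + Tm d F x b)"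
      by (simp add: Tm_props[OF fr] Dlin_add Dg_add)
    then show "Tm d F x (a + b) = Tm d F x a + Tm d F x b"
      using inj by (meson Tm_props(1)[OF fr] inj_onD xperp_add)
  next
    fix r :: real and a
    have "Dlin d F x (Tm d F x (r *\<^sub>R a)) = Dlin d F x (r *\<^sub>R Tm d F x a)"
      by (simp add: Tm_props[OF fr] Dlin_scaleR Dg_scaleR)
    then show "Tm d F x (r *\<^sub>R a) = r *\<^sub>R Tm d F x a"
      using inj by (meson Tm_props(1)[OF fr] inj_onD xperp_scaleR)
  qed
  then show ?thesis by (simp add: linear_conv_bounded_linear)
qed

lemma factA:
  assumes fr: "full_rank d F x" and inj: "inj_on (Dlin d F x) (xperp x)"
    and x: "x \<noteq> 0" and d: "\<forall>i. d i \<ge> 1" and v: "v \<in> xperp x"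
  shows "norm v \<le> onorm (Tm d F x) * norm (Lv d F x v)"
proof -
  have "Tm d F x (Lv d F x v) = v"
    unfolding Tm_def Dg_Lv[OF x d] using inj v by (rule inv_into_f_f)
  then show ?thesis using onorm[OF Tm_linear[OF fr inj], of "Lv d F x v"] by simp
qed

lemma onorm_pos:
  assumes fr: "full_rank d F x" and inj: "inj_on (Dlin d F x) (xperp x)"
    and x: "x \<noteq> 0" and d: "\<forall>i. d i \<ge> 1"
  shows "onorm (Tm d F x) > 0"
proof -
  define z :: "complex^'a" where "z = (\<chi> i. 1)"
  have "z \<noteq> 0" by (simp add: z_def vec_eq_iff)
  obtain v where v: "v \<in> xperp x" "Dlin d F x v = z"
    using fr unfolding full_rank_def by (metis UNIV_I imageE)
  have "v \<noteq> 0" using v \<open>z \<noteq> 0\<close> Dlin_zero by metis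
  then have "0 < norm v" by simp
  also have "norm v \<le> onorm (Tm d F x) * norm (Lv d F x v)" by (rule factA[OF fr inj x d v(1)])
  finally show ?thesis by (simp add: zero_less_mult_iff)
qed

lemma factB:
  fixes F :: "('k::finite, 'm::finite) sys"
  assumes card: "CARD('m) = CARD('k) + 1" and x: "x \<noteq> 0" and d: "\<forall>i. d i \<ge> 1"
    and c: "c > 0" and lb: "\<forall>v\<in>xperp x. c * norm v \<le> norm (Lv d F x v)"
  shows "full_rank d F x" "inj_on (Dlin d F x) (xperp x)" "onorm (Tm d F x) \<le> 1 / c"
proof -
  show inj: "inj_on (Dlin d F x) (xperp x)"
  proof (rule inj_onI)
    fix v w assume vw: "v \<in> xperp x" "w \<in> xperp x" "Dlin d F x v = Dlin d F x w"
    then have "Lv d F x (v - w) = 0" by (simp add: Lv_def Dlin_diff vec_eq_iff)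
    then have "c * norm (v - w) \<le> 0" using lb xperp_diff[OF vw(1,2)] by fastforce
    then have "norm (v - w) = 0" using c by (simp add: mult_le_0_iff)
    then show "v = w" by simp
  qed
  show fr: "full_rank d F x" using full_rank_iff_inj[OF card x] inj by simp
  show "onorm (Tm d F x) \<le> 1 / c"
  proof (rule onorm_le)
    fix z
    have "Lv d F x (Tm d F x z) = z" by (rule Lv_Dg[OF x d Tm_props(2)[OF fr]])
    then have "c * norm (Tm d F x z) \<le> norm z" using lb Tm_props(1)[OF fr] by metis
    then show "norm (Tm d F x z) \<le> 1 / c * norm z" using c by (simp add: field_simps)
  qed
qed

lemma norm_add_sq: "(norm (v + w))^2 = (norm v)^2 + (norm w)^2 + 2 * Re (hinner v (w::complex^'m::finite))"
proof -
  have "v + w = v - (- w)" by simp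
  then have "(norm (v + w))^2 = (norm v)^2 + (norm (- w))^2 - 2 * Re (hinner v (- w))"
    by (simp only: norm_diff_sq)
  moreover have "hinner v (- w) = - hinner v w" by (simp add: hinner_def sum_negf)
  ultimately show ?thesis by simp
qed

lemma hinner_smult_zero: "hinner v w = 0 \<Longrightarrow> hinner v (c *s w) = 0"
  by (simp add: hinner_scale_right)

lemma rot:
  fixes a b v :: "complex^'m::finite"
  assumes a: "norm a = 1" and b: "norm b = 1" and ab: "hinner a b = complex_of_real c0" and c0: "c0 \<ge> 0"
    and v: "v \<in> xperp b"
  defines "u \<equiv> v - (hinner v a / complex_of_real (1 + c0)) *s (a + b)"
  shows "u \<in> xperp a" "norm u = norm v" "norm (v - u) \<le> sqrt (2 * (1 - c0)) * norm v"
proof -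
  define h where "h = hinner v a"
  define t where "t = h / complex_of_real (1 + c0)"
  have vb: "hinner v b = 0" using v by (simp add: xperp_def)
  have ba: "hinner b a = complex_of_real c0" using ab by (simp add: hinner_commute[of b a])
  have aa: "hinner a a = 1" using a by (simp add: hinner_self)
  have bb: "hinner b b = 1" using b by (simp add: hinner_self)
  have "cmod (hinner a b) \<le> 1" using hinner_bound[of a b] a b by simp
  then have c0le: "c0 \<le> 1" using ab by simp
  have "1 + c0 \<noteq> 0" using c0 by linarith
  then have c1: "complex_of_real (1 + c0) \<noteq> 0" by (metis of_real_eq_0_iff)
  have c1': "1 + c0 > 0" using c0 by simp
  have u_def': "u = v - t *s (a + b)" by (simp add: u_def t_def h_def)
  show "u \<in> xperp a"
  proof -
    have "hinner u a = h - t * (hinner a a + hinner b a)"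
      by (simp add: u_def' hinner_diff_left hinner_scale_left hinner_add_left h_def algebra_simps)
    also have "\<dots> = 0" using c1 by (simp add: aa ba t_def)
    finally show ?thesis by (simp add: xperp_def)
  qed
  have hab: "(norm (a + b))^2 = 2 * (1 + c0)"
    using a b ab by (simp add: norm_add_sq)
  have hv: "(cmod h)^2 \<le> (norm v)^2 * (1 - c0^2)"
  proof -
    have "h = hinner v (a - complex_of_real c0 *s b)"
      by (simp add: h_def hinner_diff_right hinner_scale_right vb)
    then have "cmod h \<le> norm v * norm (a - complex_of_real c0 *s b)"
      by (simp add: hinner_bound)
    moreover have "(norm (a - complex_of_real c0 *s b))^2 = 1 - c0^2"
    proof -
      have "(norm (a - complex_of_real c0 *s b))^2 = (norm a)^2 + (norm (complex_of_real c0 *s b))^2 - 2 * Re (hinner a (complex_of_real c0 *s b))"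
        by (rule norm_diff_sq)
      then show ?thesis using a b ab c0 by (simp add: norm_smult hinner_scale_right power2_eq_square)
    qed
    ultimately have "(cmod h)^2 \<le> (norm v * norm (a - complex_of_real c0 *s b))^2"
      by (simp add: power_mono)
    then show ?thesis using \<open>(norm (a - complex_of_real c0 *s b))^2 = 1 - c0^2\<close>
      by (simp add: power_mult_distrib)
  qed
  have ct: "cmod t = cmod h / (1 + c0)"
  proof -
    have "cmod (complex_of_real (1 + c0)) = 1 + c0" using c1' by (simp only: norm_of_real abs_of_pos)
    then show ?thesis by (simp only: t_def norm_divide)
  qed
  have nw: "(norm (t *s (a + b)))^2 = 2 * (cmod h)^2 / (1 + c0)"
  proof -
    have "(norm (t *s (a + b)))^2 = (cmod t)^2 * (norm (a + b))^2"
      by (simp only: norm_smult power_mult_distrib)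
    also have "\<dots> = 2 * (cmod h)^2 / (1 + c0)"
    proof -
      have q: "\<And>q::real. q > 0 \<Longrightarrow> (cmod h / q)^2 * (2 * q) = 2 * (cmod h)^2 / q"
        by (simp add: power2_eq_square field_simps)
      show ?thesis by (simp only: ct hab q[OF c1'])
    qed
    finally show ?thesis .
  qed
  have vw: "Re (hinner v (t *s (a + b))) = (cmod h)^2 / (1 + c0)"
  proof -
    have "hinner v (t *s (a + b)) = cnj t * h"
      by (simp add: hinner_scale_right hinner_add_right vb h_def)
    also have "\<dots> = complex_of_real ((cmod h)^2 / (1 + c0))"
      by (simp add: t_def mult.commute[of "cnj h"] mult_cnj_sq)
    finally show ?thesis by simp
  qed
  have "(norm u)^2 = (norm v)^2"
    unfolding u_def' using nw vw by (simp add: norm_diff_sq)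
  then show "norm u = norm v" by (simp add: power2_eq_iff_nonneg)
  have "(norm (v - u))^2 \<le> (sqrt (2 * (1 - c0)) * norm v)^2"
  proof -
    have "(norm (v - u))^2 = 2 * (cmod h)^2 / (1 + c0)" using nw by (simp add: u_def')
    also have "\<dots> \<le> 2 * ((norm v)^2 * (1 - c0^2)) / (1 + c0)"
      using hv c1' by (intro divide_right_mono mult_left_mono) auto
    also have "\<dots> = (sqrt (2 * (1 - c0)) * norm v)^2"
    proof -
      have s2: "(sqrt (2*(1-c0)))^2 = 2*(1-c0)" using c0le by simp
      have "2 * ((norm v)^2 * (1 - c0^2)) / (1 + c0) = 2*(1-c0) * (norm v)^2"
        using c1' by (simp add: power2_eq_square field_simps)
      then show ?thesis by (simp only: power_mult_distrib s2)
    qed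
    finally show ?thesis .
  qed
  then show "norm (v - u) \<le> sqrt (2 * (1 - c0)) * norm v"
    by (rule power2_le_imp_le) (use c0le in simp)
qed

definition DD :: "nat \<Rightarrow> (('m::finite \<Rightarrow> nat) \<Rightarrow> complex) \<Rightarrow> complex^'m \<Rightarrow> complex^'m \<Rightarrow> complex" where
  "DD k p y v = (\<Sum>j\<in>UNIV. v$j * ev (k - 1) (pd j p) y)"

lemma Dlin_DD:
  assumes "\<forall>i. d i \<ge> 1"
  shows "Dlin d F x v $ i = DD (d i) (F i) x v"
  using assms by (simp add: Dlin_def DD_def Dmat_eq mult.commute)

lemma ev_diff: "ev k (\<lambda>\<alpha>. p \<alpha> - q \<alpha>) y = ev k p y - ev k q y"
  by (simp add: ev_def ring_distribs sum_subtractf)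
lemma ev_div: "ev k (\<lambda>\<alpha>. p \<alpha> / c) y = ev k p y / c"
  by (simp add: ev_def sum_divide_distrib)
lemma pd_diff: "pd j (\<lambda>\<alpha>. p \<alpha> - q \<alpha>) = (\<lambda>\<beta>. pd j p \<beta> - pd j q \<beta>)"
  by (simp add: pd_def fun_eq_iff ring_distribs)
lemma pd_div: "pd j (\<lambda>\<alpha>. p \<alpha> / c) = (\<lambda>\<beta>. pd j p \<beta> / c)"
  by (simp add: pd_def fun_eq_iff)

lemma DD_diff_v: "DD k p y (v - w) = DD k p y v - DD k p y w"
  by (simp add: DD_def ring_distribs sum_subtractf)
lemma DD_diff_p: "DD k (\<lambda>\<alpha>. p \<alpha> - q \<alpha>) y v = DD k p y v - DD k q y v"
  by (simp add: DD_def pd_diff ev_diff ring_distribs sum_subtractf)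
lemma DD_div: "DD k (\<lambda>\<alpha>. p \<alpha> / c) y v = DD k p y v / c"
  by (simp add: DD_def pd_div ev_div sum_divide_distrib)

lemma bw_div: "c > 0 \<Longrightarrow> bw k (\<lambda>\<alpha>. p \<alpha> / complex_of_real c) = bw k p / c^2"
  by (simp add: bw_def sum_divide_distrib norm_divide power_divide)

lemma bw_swap: "bw k (\<lambda>\<alpha>. p \<alpha> - q \<alpha>) = bw k (\<lambda>\<alpha>. q \<alpha> - p \<alpha>)"
  by (simp add: bw_def norm_minus_commute)

lemma ev_scale: "ev k p (c *s y) = c ^ k * ev k p (y::complex^'m::finite)"
proof -
  have t: "p \<alpha> * (\<Prod>j\<in>UNIV. ((c *s y)$j) ^ (\<alpha> j)) = c ^ k * (p \<alpha> * (\<Prod>j\<in>UNIV. (y$j) ^ (\<alpha> j)))"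
    if "\<alpha> \<in> mons k" for \<alpha>
  proof -
    have "(\<Prod>j\<in>UNIV. ((c *s y)$j) ^ (\<alpha> j)) = (\<Prod>j\<in>UNIV. c ^ (\<alpha> j)) * (\<Prod>j\<in>UNIV. (y$j) ^ (\<alpha> j))"
      by (simp add: power_mult_distrib prod.distrib)
    also have "(\<Prod>j\<in>UNIV. c ^ (\<alpha> j)) = c ^ k"
      using that by (simp add: power_sum[symmetric] mons_def)
    finally show ?thesis by simp
  qed
  show ?thesis unfolding ev_def sum_distrib_left by (rule sum.cong[OF refl]) (rule t)
qed

lemma DD_scale: "DD k p (c *s y) v = c ^ (k - 1) * DD k p (y::complex^'m::finite) v"
  by (simp add: DD_def ev_scale sum_distrib_left algebra_simps)

lemma DD_bound:
  assumes "k \<ge> 1"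
  shows "cmod (DD k p y v) \<le> norm v * (real k * sqrt (bw k p)) * norm (y::complex^'m::finite) ^ (k - 1)"
proof -
  obtain m where k: "k = Suc m" using assms by (cases k) auto
  have "cmod (DD k p y v) \<le> (\<Sum>j\<in>UNIV. cmod (v$j) * cmod (ev m (pd j p) y))"
    unfolding DD_def k by (rule order_trans[OF norm_sum]) (simp add: norm_mult)
  also have "\<dots> \<le> (\<Sum>j\<in>UNIV. cmod (v$j) * (sqrt (bw m (pd j p)) * norm y ^ m))"
    by (intro sum_mono mult_left_mono ev_bound) auto
  also have "\<dots> = (\<Sum>j\<in>UNIV. cmod (v$j) * sqrt (bw m (pd j p))) * norm y ^ m"
    by (simp add: sum_distrib_right mult.assoc)
  also have "\<dots> \<le> (norm v * sqrt (\<Sum>j\<in>UNIV. (sqrt (bw m (pd j p)))^2)) * norm y ^ m"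
    by (intro mult_right_mono cs_vec) (auto simp: bw_nonneg)
  also have "\<dots> = norm v * (real k * sqrt (bw k p)) * norm y ^ (k - 1)"
    by (simp only: sum_sqrt_sq sqrt_bw_pd k) simp
  finally show ?thesis .
qed

lemma DD_lip:
  fixes x y :: "complex^'m::finite"
  assumes "k \<ge> 1" "norm x \<le> r" "norm y \<le> r"
  shows "cmod (DD k p y v - DD k p x v) \<le> norm v * (real k * sqrt (bw k p)) * (real (k - 1) * r ^ (k - 2)) * norm (y - x)"
proof -
  obtain m where k: "k = Suc m" using assms by (cases k) auto
  have r0: "r \<ge> 0" using assms(2) norm_ge_zero order_trans by blast
  have "DD k p y v - DD k p x v = (\<Sum>j\<in>UNIV. v$j * (ev m (pd j p) y - ev m (pd j p) x))"
    by (simp add: DD_def k ring_distribs sum_subtractf)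
  then have "cmod (DD k p y v - DD k p x v) \<le> (\<Sum>j\<in>UNIV. cmod (v$j) * cmod (ev m (pd j p) y - ev m (pd j p) x))"
    by (simp only:) (rule order_trans[OF norm_sum], simp add: norm_mult)
  also have "\<dots> \<le> (\<Sum>j\<in>UNIV. cmod (v$j) * (sqrt (bw m (pd j p)) * (real m * r ^ (m - 1) * norm (y - x))))"
  proof (intro sum_mono mult_left_mono)
    fix j
    show "cmod (ev m (pd j p) y - ev m (pd j p) x) \<le> sqrt (bw m (pd j p)) * (real m * r ^ (m - 1) * norm (y - x))"
      using ev_lip[OF assms(2,3), of m "pd j p"] by (simp add: algebra_simps)
  qed auto
  also have "\<dots> = (\<Sum>j\<in>UNIV. cmod (v$j) * sqrt (bw m (pd j p))) * (real m * r ^ (m - 1) * norm (y - x))"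
    by (simp add: sum_distrib_right mult.assoc)
  also have "\<dots> \<le> (norm v * sqrt (\<Sum>j\<in>UNIV. (sqrt (bw m (pd j p)))^2)) * (real m * r ^ (m - 1) * norm (y - x))"
    by (intro mult_right_mono cs_vec) (auto simp: bw_nonneg r0)
  also have "\<dots> = norm v * (real k * sqrt (bw k p)) * (real (k - 1) * r ^ (k - 2)) * norm (y - x)"
    by (simp only: sum_sqrt_sq sqrt_bw_pd k) (simp add: algebra_simps)
  finally show ?thesis .
qed

lemma xperp_scale: "c \<noteq> 0 \<Longrightarrow> xperp (c *s x) = xperp x"
  by (auto simp: xperp_def hinner_scale_right)

lemma cancel_aux: "(a::real) \<noteq> 0 \<Longrightarrow> a * X / (s * (a * n)) = X / (s * n)"
  by (metis mult.left_commute mult_divide_mult_cancel_left_if)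

lemma norm_Lv_scale:
  fixes x :: "complex^'m::finite"
  assumes "\<forall>i. d i \<ge> 1" "c \<noteq> 0"
  shows "norm (Lv d F (c *s x) w) = norm (Lv d F x w)"
proof -
  have "cmod (Lv d F (c *s x) w $ i) = cmod (Lv d F x w $ i)" for i
    using assms by (simp add: Lv_def Dlin_DD DD_scale norm_smult norm_mult norm_divide norm_power power_mult_distrib cancel_aux)
  then show ?thesis by (simp add: norm_vec_def)
qed

lemma vec_bound:
  fixes A :: "complex^'k::finite"
  assumes "\<And>i. cmod (A$i) \<le> s * (e i + t * f i)" "s \<ge> 0" "t \<ge> 0" "\<And>i. e i \<ge> 0" "\<And>i. f i \<ge> 0"
  shows "norm A \<le> s * (L2_set e UNIV + t * L2_set f UNIV)"
proof -
  have "norm A = L2_set (\<lambda>i. cmod (A$i)) UNIV" by (simp add: norm_vec_def)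
  also have "\<dots> \<le> L2_set (\<lambda>i. s * (e i + t * f i)) UNIV"
    by (rule L2_set_mono) (auto simp: assms)
  also have "\<dots> = s * L2_set (\<lambda>i. e i + t * f i) UNIV"
    using assms by (simp add: L2_set_right_distrib)
  also have "L2_set (\<lambda>i. e i + t * f i) UNIV \<le> L2_set e UNIV + L2_set (\<lambda>i. t * f i) UNIV"
    by (rule L2_set_triangle_ineq)
  also have "L2_set (\<lambda>i. t * f i) UNIV = t * L2_set f UNIV"
    using assms by (simp add: L2_set_right_distrib)
  finally show ?thesis using assms(2) by (simp add: mult_left_mono)
qed

lemma L2_sqrt: "(\<And>i. g i \<ge> 0) \<Longrightarrow> L2_set (\<lambda>i. sqrt (g i)) A = sqrt (\<Sum>i\<in>A. g i)"
  by (simp add: L2_set_def)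

lemma bwnorm_eq: "bwnorm d F = sqrt (\<Sum>i\<in>UNIV. bw (d i) (F i))"
  by (simp add: bwnorm_def bw_def)

lemma bwnorm_sq: "(bwnorm d F)^2 = (\<Sum>i\<in>UNIV. bw (d i) (F i))"
  by (simp add: bwnorm_eq sum_nonneg bw_nonneg)

lemma pert:
  fixes P Q :: "('k::finite, 'm::finite) sys" and a b v :: "complex^'m"
  assumes d1: "\<forall>i. d i \<ge> 1" and dD: "\<forall>i. d i \<le> D"
    and a: "norm a = 1" and b: "norm b = 1" and ab: "hinner a b = complex_of_real c0" and c0: "c0 \<ge> 0"
    and th: "2 * (1 - c0) \<le> \<theta>^2" and th0: "\<theta> \<ge> 0"
    and nP: "bwnorm d P > 0" and nQ: "bwnorm d Q > 0"
    and v: "v \<in> xperp b"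
  shows "\<exists>u\<in>xperp a. norm u = norm v \<and>
    norm (Lv d P a u) / bwnorm d P - sqrt (real D) * (nrmdiff d P Q + real D * \<theta>) * norm v \<le> norm (Lv d Q b v) / bwnorm d Q"
proof -
  define u where "u = v - (hinner v a / complex_of_real (1 + c0)) *s (a + b)"
  have u: "u \<in> xperp a" "norm u = norm v" "norm (v - u) \<le> sqrt (2 * (1 - c0)) * norm v"
    using rot[OF a b ab c0 v] unfolding u_def by auto
  have s2: "sqrt (2 * (1 - c0)) \<le> \<theta>"
    using real_sqrt_le_mono[OF th] th0 by simp
  have vu: "norm (v - u) \<le> \<theta> * norm v"
    using u(3) s2 by (meson mult_right_mono norm_ge_zero order_trans)
  have ba: "norm (b - a) \<le> \<theta>"
  proof -
    have "(norm (b - a))^2 = (norm b)^2 + (norm a)^2 - 2 * Re (hinner b a)" by (rule norm_diff_sq)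
    also have "\<dots> = 2 * (1 - c0)" using a b ab by (simp add: hinner_commute[of b a])
    finally have "(norm (b - a))^2 \<le> \<theta>^2" using th by simp
    then show ?thesis using th0 by (rule power2_le_imp_le)
  qed
  define nP where "nP = bwnorm d P"
  define nQ where "nQ = bwnorm d Q"
  define Ph where "Ph i \<alpha> = P i \<alpha> / complex_of_real nP" for i \<alpha>
  define Qh where "Qh i \<alpha> = Q i \<alpha> / complex_of_real nQ" for i \<alpha>
  define X where "X = (\<chi> i. DD (d i) (Qh i) b v / complex_of_real (sqrt (real (d i))))"
  define Y where "Y = (\<chi> i. DD (d i) (Ph i) a u / complex_of_real (sqrt (real (d i))))"
  define e where "e i = sqrt (bw (d i) (\<lambda>\<alpha>. Qh i \<alpha> - Ph i \<alpha>))" for i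
  define f where "f i = sqrt (bw (d i) (Ph i))" for i
  have nP0: "nP > 0" and nQ0: "nQ > 0" using nP nQ by (auto simp: nP_def nQ_def)
  have LX: "norm (Lv d Q b v) / nQ = norm X"
  proof -
    have "Lv d Q b v = complex_of_real nQ *s X"
      using nQ0 by (simp add: Lv_def X_def Dlin_DD[OF d1] b vec_eq_iff Qh_def[abs_def] DD_div)
    then show ?thesis using nQ0 by (simp add: norm_smult)
  qed
  have LY: "norm (Lv d P a u) / nP = norm Y"
  proof -
    have "Lv d P a u = complex_of_real nP *s Y"
      using nP0 by (simp add: Lv_def Y_def Dlin_DD[OF d1] a vec_eq_iff Ph_def[abs_def] DD_div)
    then show ?thesis using nP0 by (simp add: norm_smult)
  qed
  have comp: "cmod ((Y - X)$i) \<le> (sqrt (real D) * norm v) * (e i + (real D * \<theta>) * f i)" for i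
  proof -
    define k where "k = d i"
    have k1: "k \<ge> 1" and kD: "k \<le> D" using d1 dD by (auto simp: k_def)
    have e0: "e i \<ge> 0" and f0: "f i \<ge> 0" by (auto simp: e_def f_def bw_nonneg)
    have split: "DD k (Qh i) b v - DD k (Ph i) a u =
        DD k (\<lambda>\<alpha>. Qh i \<alpha> - Ph i \<alpha>) b v + DD k (Ph i) b (v - u) + (DD k (Ph i) b u - DD k (Ph i) a u)"
      by (simp add: DD_diff_p DD_diff_v)
    have T1: "cmod (DD k (\<lambda>\<alpha>. Qh i \<alpha> - Ph i \<alpha>) b v) \<le> norm v * (real k * e i)"
      using DD_bound[OF k1, of "\<lambda>\<alpha>. Qh i \<alpha> - Ph i \<alpha>" b v] b by (simp add: e_def k_def)
    have T2: "cmod (DD k (Ph i) b (v - u)) \<le> (\<theta> * norm v) * (real k * f i)"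
    proof -
      have "cmod (DD k (Ph i) b (v - u)) \<le> norm (v - u) * (real k * f i)"
        using DD_bound[OF k1, of "Ph i" b "v - u"] b by (simp add: f_def k_def)
      also have "\<dots> \<le> (\<theta> * norm v) * (real k * f i)"
        by (rule mult_right_mono[OF vu]) (simp add: f0)
      finally show ?thesis .
    qed
    have T3: "cmod (DD k (Ph i) b u - DD k (Ph i) a u) \<le> norm v * (real k * f i) * (real (k - 1) * \<theta>)"
    proof -
      have "cmod (DD k (Ph i) b u - DD k (Ph i) a u) \<le> norm u * (real k * f i) * (real (k - 1) * 1 ^ (k - 2)) * norm (b - a)"
        using DD_lip[OF k1, of a 1 b "Ph i" u] a b by (simp add: f_def k_def)
      also have "\<dots> \<le> norm u * (real k * f i) * (real (k - 1) * 1 ^ (k - 2)) * \<theta>"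
        by (rule mult_left_mono[OF ba]) (simp add: f0)
      finally show ?thesis using u(2) by (simp add: algebra_simps)
    qed
    have "cmod (DD k (Qh i) b v - DD k (Ph i) a u) \<le>
        norm v * (real k * e i) + (\<theta> * norm v) * (real k * f i) + norm v * (real k * f i) * (real (k - 1) * \<theta>)"
      unfolding split by (rule order_trans[OF norm_triangle_ineq] order_trans[OF add_mono[OF norm_triangle_ineq order_refl]] add_mono T1 T2 T3)+
    also have "\<dots> = real k * (norm v * (e i + real k * \<theta> * f i))"
      using k1 by (simp add: algebra_simps of_nat_diff)
    finally have A: "cmod (DD k (Qh i) b v - DD k (Ph i) a u) \<le> real k * (norm v * (e i + real k * \<theta> * f i))" .
    have "cmod ((Y - X)$i) = cmod (DD k (Qh i) b v - DD k (Ph i) a u) / sqrt (real k)"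
      by (simp add: X_def Y_def k_def norm_divide norm_minus_commute diff_divide_distrib[symmetric])
    also have "\<dots> \<le> real k * (norm v * (e i + real k * \<theta> * f i)) / sqrt (real k)"
      by (rule divide_right_mono[OF A]) simp
    also have "\<dots> = sqrt (real k) * (norm v * (e i + real k * \<theta> * f i))"
    proof -
      have q: "real k / sqrt (real k) = sqrt (real k)" by (simp add: real_div_sqrt)
      show ?thesis by (simp only: times_divide_eq_left[symmetric] q)
    qed
    also have "\<dots> \<le> sqrt (real D) * (norm v * (e i + real D * \<theta> * f i))"
      using kD e0 f0 th0 by (intro mult_mono real_sqrt_le_mono mult_left_mono add_left_mono mult_right_mono) auto
    finally show ?thesis by (simp add: algebra_simps)
  qed
  have "norm (Y - X) \<le> (sqrt (real D) * norm v) * (L2_set e UNIV + (real D * \<theta>) * L2_set f UNIV)"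
    by (rule vec_bound[OF comp]) (auto simp: e_def f_def bw_nonneg th0)
  moreover have "L2_set e UNIV = nrmdiff d P Q"
  proof -
    have "L2_set e UNIV = sqrt (\<Sum>i\<in>UNIV. bw (d i) (\<lambda>\<alpha>. Qh i \<alpha> - Ph i \<alpha>))"
      unfolding e_def by (rule L2_sqrt) (simp add: bw_nonneg)
    also have "\<dots> = sqrt (\<Sum>i\<in>UNIV. bw (d i) (\<lambda>\<alpha>. Ph i \<alpha> - Qh i \<alpha>))"
      by (simp add: bw_swap[of _ "Qh _"])
    finally show ?thesis by (simp add: nrmdiff_def bwnorm_eq Ph_def[abs_def] Qh_def[abs_def] nP_def nQ_def)
  qed
  moreover have "L2_set f UNIV = 1"
  proof -
    have "L2_set f UNIV = sqrt (\<Sum>i\<in>UNIV. bw (d i) (Ph i))"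
      unfolding f_def by (rule L2_sqrt) (simp add: bw_nonneg)
    also have "(\<Sum>i\<in>UNIV. bw (d i) (Ph i)) = (\<Sum>i\<in>UNIV. bw (d i) (P i)) / nP^2"
      using nP0 by (simp add: Ph_def[abs_def] bw_div sum_divide_distrib)
    also have "\<dots> = 1" using nP0 by (simp add: nP_def bwnorm_sq[symmetric])
    finally show ?thesis by simp
  qed
  ultimately have YX: "norm (Y - X) \<le> sqrt (real D) * (nrmdiff d P Q + real D * \<theta>) * norm v"
    by (simp add: algebra_simps)
  have "norm Y \<le> norm X + norm (Y - X)" by (rule norm_triangle_sub)
  then have "norm (Lv d P a u) / bwnorm d P - sqrt (real D) * (nrmdiff d P Q + real D * \<theta>) * norm v \<le> norm (Lv d Q b v) / bwnorm d Q"
    using LX LY YX by (simp add: nP_def nQ_def)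
  then show ?thesis using u(1,2) by blast
qed

lemma arith2:
  fixes \<epsilon> s p m \<mu> :: real
  assumes "0 < \<epsilon>" "\<epsilon> \<le> 1/4" "0 \<le> s" "s \<le> 3*\<epsilon>/5" "0 \<le> p" "p*(1-s) \<le> s" "m > 0" "\<mu> > 0" "m*(1-p) \<le> \<mu>" "p < 1"
  shows "m \<le> (1+\<epsilon>)*\<mu>"
proof -
  have s1: "1 - s > 0" using assms by linarith
  have "p \<le> s / (1 - s)" using assms(6) s1 by (simp add: field_simps)
  also have "s / (1 - s) \<le> \<epsilon> / (1 + \<epsilon>)"
  proof -
    have A: "s*(1+2*\<epsilon>) \<le> 3*\<epsilon>/5*(1+2*\<epsilon>)" using assms by (intro mult_right_mono) auto
    have B0: "\<epsilon>*\<epsilon> \<le> \<epsilon>*(1/4)" using assms by (intro mult_left_mono) auto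
    have B: "\<epsilon>*\<epsilon> \<le> \<epsilon>/4" using B0 by simp
    have e1: "s*(1+2*\<epsilon>) = s + 2*(\<epsilon> * s)" by (simp add: algebra_simps)
    have e2: "3*\<epsilon>/5*(1+2*\<epsilon>) = 3/5*\<epsilon> + 6/5*(\<epsilon>*\<epsilon>)" by (simp add: algebra_simps)
    have e3: "s*(1+\<epsilon>) = s + \<epsilon> * s" by (simp add: algebra_simps)
    have e4: "\<epsilon>*(1-s) = \<epsilon> - \<epsilon> * s" by (simp add: algebra_simps)
    have "s*(1+\<epsilon>) \<le> \<epsilon>*(1-s)" unfolding e3 e4 using A B e1 e2 assms(1) by linarith
    then show ?thesis using s1 assms by (simp add: field_simps)
  qed
  finally have p: "p \<le> \<epsilon> / (1 + \<epsilon>)" .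
  then have "1 \<le> (1+\<epsilon>)*(1-p)" using assms by (simp add: field_simps)
  then have "m \<le> m * ((1+\<epsilon>)*(1-p))" using assms(7) by simp
  also have "\<dots> = (1+\<epsilon>) * (m*(1-p))" by simp
  also have "\<dots> \<le> (1+\<epsilon>) * \<mu>" using assms by (intro mult_left_mono) auto
  finally show ?thesis .
qed

lemma cos_bound: "2 * (1 - cos t) \<le> (t::real)^2"
proof -
  have "cos t = cos (2 * (t/2))" by simp
  also have "\<dots> = 1 - 2 * (sin (t/2))^2" by (rule cos_double_sin)
  finally have c: "2 * (1 - cos t) = 4 * (sin (t/2))^2" by simp
  have "(sin (t/2))^2 = \<bar>sin (t/2)\<bar>^2" by simp
  also have "\<dots> \<le> \<bar>t/2\<bar>^2" by (rule power_mono[OF abs_sin_x_le_abs_x]) simp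
  also have "\<dots> = t^2/4" by (simp add: power_divide)
  finally show ?thesis using c by simp
qed



lemma bwnorm_pos:
  fixes F :: "('k::finite, 'm::finite) sys"
  assumes "homsys d F" "F \<noteq> (\<lambda>_ _. 0)"
  shows "bwnorm d F > 0"
proof -
  obtain i \<alpha> where F: "F i \<alpha> \<noteq> 0" using assms(2) by (meson ext)
  then have \<alpha>: "\<alpha> \<in> mons (d i)" using assms(1) unfolding homsys_def by blast
  have "0 < (\<Prod>j\<in>UNIV. fact (\<alpha> j)) / fact (d i) * (cmod (F i \<alpha>))^2"
    using F by (simp add: prod_pos)
  also have "\<dots> \<le> bw (d i) (F i)"
    unfolding bw_def by (rule member_le_sum[OF \<alpha>]) (auto simp: finite_mons prod_nonneg)
  also have "\<dots> \<le> (\<Sum>i\<in>UNIV. bw (d i) (F i))"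
    by (rule member_le_sum) (auto simp: bw_nonneg)
  finally show ?thesis by (simp add: bwnorm_eq)
qed

lemma nrmdiff_sym: "nrmdiff d G F = nrmdiff d F G"
proof -
  have "bw (d i) (\<lambda>\<alpha>. G i \<alpha> / complex_of_real (bwnorm d G) - F i \<alpha> / complex_of_real (bwnorm d F)) =
        bw (d i) (\<lambda>\<alpha>. F i \<alpha> / complex_of_real (bwnorm d F) - G i \<alpha> / complex_of_real (bwnorm d G))" for i
    by (rule bw_swap)
  then show ?thesis unfolding nrmdiff_def bwnorm_eq by simp
qed

lemma d_le_Dmax: "d i \<le> Dmax (d :: 'k::finite \<Rightarrow> nat)"
  unfolding Dmax_def by (rule Max_ge) auto

theorem corollary1:
  fixes F G :: "('k::finite, 'm::finite) sys" and d :: "'k \<Rightarrow> nat"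
    and x y :: "complex^'m" and \<epsilon> :: real
  assumes "CARD('m) = CARD('k) + 1" and "CARD('k) \<ge> 2"
    and "\<forall>i. d i \<ge> 1" and "Dmax d \<ge> 2"
    and "homsys d F" and "homsys d G"
    and "F \<noteq> (\<lambda>_ _. 0)" and "G \<noteq> (\<lambda>_ _. 0)"
    and "x \<noteq> 0" and "y \<noteq> 0"
    and "0 < \<epsilon>" and "\<epsilon> \<le> 1/4"
    and "ereal (real (Dmax d) powr (3/2) / 2) * mu d F x * ereal (dR x y) \<le> ereal (\<epsilon>/5)"
    and "ereal (sqrt (real (Dmax d))) * mu d F x * ereal (nrmdiff d F G) \<le> ereal (\<epsilon>/5)"
    and "full_rank d F x"
  shows "full_rank d G y \<and> ereal (1 - \<epsilon>) * mu d G y \<le> mu d F x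
         \<and> mu d F x \<le> ereal (1 + \<epsilon>) * mu d G y"
proof -
  note card = assms(1) and d1 = assms(3) and x0 = assms(9) and y0 = assms(10)
  note eps = assms(11,12) and frF = assms(15)
  define D where "D = Dmax d"
  have dD: "\<forall>i. d i \<le> D" by (simp add: D_def d_le_Dmax)
  have D2: "real D \<ge> 2" using assms(4) by (simp add: D_def)
  define nF where "nF = bwnorm d F"
  define nG where "nG = bwnorm d G"
  have nF0: "nF > 0" using bwnorm_pos[OF assms(5,7)] by (simp add: nF_def)
  have nG0: "nG > 0" using bwnorm_pos[OF assms(6,8)] by (simp add: nG_def)
  have injF: "inj_on (Dlin d F x) (xperp x)" using full_rank_iff_inj[OF card x0] frF by simp
  define NF where "NF = onorm (Tm d F x)"
  have NF0: "NF > 0" unfolding NF_def by (rule onorm_pos[OF frF injF x0 d1])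
  define m where "m = nF * NF"
  have m0: "m > 0" using nF0 NF0 by (simp add: m_def)
  have muF: "mu d F x = ereal m" using mu_eq[OF frF injF] by (simp add: m_def nF_def NF_def)
  define \<theta> where "\<theta> = dR x y"
  define \<delta> where "\<delta> = nrmdiff d F G"
  have hyp1: "real D powr (3/2) / 2 * m * \<theta> \<le> \<epsilon>/5"
    using assms(13) by (simp add: muF D_def \<theta>_def)
  have hyp2: "sqrt (real D) * m * \<delta> \<le> \<epsilon>/5"
    using assms(14) by (simp add: muF D_def \<delta>_def)
  define h where "h = hinner x y"
  define \<omega> where "\<omega> = (if h = 0 then 1 else h / complex_of_real (cmod h))"
  define a where "a = complex_of_real (1 / norm x) *s x"
  define b where "b = (\<omega> / complex_of_real (norm y)) *s y"
  define c0 where "c0 = cmod h / (norm x * norm y)"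
  have c\<omega>: "cmod \<omega> = 1" by (simp add: \<omega>_def norm_divide)
  have \<omega>0: "\<omega> \<noteq> 0" using c\<omega> by auto
  have na: "norm a = 1" using x0 by (simp add: a_def norm_smult norm_divide)
  have nb: "norm b = 1" using y0 by (simp add: b_def norm_smult norm_divide c\<omega>)
  have ch: "cnj \<omega> * h = complex_of_real (cmod h)"
  proof (cases "h = 0")
    case True then show ?thesis by (simp add: \<omega>_def)
  next
    case False
    have "cnj h * h = complex_of_real (cmod h) * complex_of_real (cmod h)"
      by (metis mult.commute mult_cnj_sq of_real_mult power2_eq_square)
    then show ?thesis using False by (simp add: \<omega>_def)
  qed
  have ab: "hinner a b = complex_of_real c0"
  proof -
    have "hinner a b = complex_of_real (1 / norm x) * (cnj \<omega> / complex_of_real (norm y)) * h"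
      by (simp add: a_def b_def hinner_scale_left hinner_scale_right h_def)
    also have "\<dots> = (cnj \<omega> * h) / complex_of_real (norm x * norm y)"
      by (simp add: field_simps)
    finally show ?thesis by (simp add: ch c0_def)
  qed
  have c00: "c0 \<ge> 0" by (simp add: c0_def)
  have c01: "c0 \<le> 1"
  proof -
    have "cmod h \<le> norm x * norm y" by (simp add: h_def hinner_bound)
    then show ?thesis using x0 y0 by (simp add: c0_def)
  qed
  have th: "\<theta> = arccos c0" by (simp add: \<theta>_def dR_def c0_def h_def)
  have th0: "\<theta> \<ge> 0" using c00 c01 th by (simp add: arccos_lbound)
  have cth: "cos \<theta> = c0" using c00 c01 th by simp
  have th2: "2 * (1 - c0) \<le> \<theta>^2" using cos_bound[of \<theta>] cth by simp
  have xa: "xperp a = xperp x" using x0 by (simp add: a_def xperp_scale)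
  have yb: "xperp b = xperp y" using y0 \<omega>0 by (simp add: b_def xperp_scale)
  have La: "norm (Lv d P a w) = norm (Lv d P x w)" for P :: "('k, 'm) sys" and w
    unfolding a_def by (rule norm_Lv_scale[OF d1]) (use x0 in simp)
  have Lb: "norm (Lv d P b w) = norm (Lv d P y w)" for P :: "('k, 'm) sys" and w
    unfolding b_def by (rule norm_Lv_scale[OF d1]) (use y0 \<omega>0 in simp)
  define \<eta> where "\<eta> = sqrt (real D) * (\<delta> + real D * \<theta>)"
  have \<delta>0: "\<delta> \<ge> 0" by (simp add: \<delta>_def nrmdiff_def bwnorm_eq sum_nonneg bw_nonneg)
  have \<eta>0: "\<eta> \<ge> 0" using \<delta>0 th0 by (simp add: \<eta>_def)
  have s: "\<eta> * m \<le> 3 * \<epsilon> / 5"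
  proof -
    have "real D powr (3/2) = real D powr (1 + 1/2)" by simp
    also have "\<dots> = real D powr 1 * real D powr (1/2)" by (rule powr_add)
    also have "\<dots> = real D * sqrt (real D)" using D2 by (simp add: powr_half_sqrt)
    finally have "real D powr (3/2) = real D * sqrt (real D)" .
    then have "real D * sqrt (real D) * m * \<theta> \<le> 2 * \<epsilon> / 5" using hyp1 by simp
    then show ?thesis using hyp2 by (simp add: \<eta>_def algebra_simps)
  qed
  have lbG: "\<forall>v\<in>xperp y. (nG * (1/m - \<eta>)) * norm v \<le> norm (Lv d G y v)"
  proof
    fix v assume v: "v \<in> xperp y"
    then have vb: "v \<in> xperp b" using yb by simp
    obtain u where u: "u \<in> xperp a" "norm u = norm v"
      "norm (Lv d F a u) / bwnorm d F - sqrt (real D) * (nrmdiff d F G + real D * \<theta>) * norm v \<le> norm (Lv d G b v) / bwnorm d G"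
      using pert[OF d1 dD na nb ab c00 th2 th0 _ _ vb, of F G] assms(5-8) bwnorm_pos by blast
    have ux: "u \<in> xperp x" using u(1) xa by simp
    have "norm u \<le> NF * norm (Lv d F x u)" unfolding NF_def by (rule factA[OF frF injF x0 d1 ux])
    then have "norm v / m \<le> norm (Lv d F a u) / nF"
      using u(2) La m0 nF0 NF0 by (simp add: m_def field_simps)
    then have "norm v / m - \<eta> * norm v \<le> norm (Lv d G y v) / nG"
      using u(3) Lb by (simp add: nF_def nG_def \<eta>_def \<delta>_def)
    then show "(nG * (1/m - \<eta>)) * norm v \<le> norm (Lv d G y v)"
      using nG0 by (simp add: field_simps)
  qed
  have cG: "nG * (1/m - \<eta>) > 0"
  proof -
    have "\<eta> * m < 1" using s eps by simp
    then have "\<eta> < 1/m" using m0 by (simp add: field_simps)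
    then show ?thesis using nG0 by simp
  qed
  have fbG: "full_rank d G y" "inj_on (Dlin d G y) (xperp y)" "onorm (Tm d G y) \<le> 1 / (nG * (1/m - \<eta>))"
    using factB[OF card y0 d1 cG lbG] by auto
  define NG where "NG = onorm (Tm d G y)"
  define \<mu>G where "\<mu>G = nG * NG"
  have NG0: "NG > 0" unfolding NG_def by (rule onorm_pos[OF fbG(1,2) y0 d1])
  have \<mu>G0: "\<mu>G > 0" using nG0 NG0 by (simp add: \<mu>G_def)
  have muG: "mu d G y = ereal \<mu>G" using mu_eq[OF fbG(1,2)] by (simp add: \<mu>G_def nG_def NG_def)
  have up1: "\<mu>G * (1 - \<eta> * m) \<le> m"
  proof -
    have "\<mu>G \<le> nG * (1 / (nG * (1/m - \<eta>)))"
      using mult_left_mono[OF fbG(3), of nG] nG0 by (simp add: \<mu>G_def NG_def)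
    also have "\<dots> = m / (1 - \<eta> * m)"
    proof -
      have sm: "1 - \<eta> * m > 0" using s eps by simp
      have "1/m - \<eta> = (1 - \<eta> * m) / m" using m0 by (simp add: field_simps)
      then show ?thesis using nG0 m0 sm by simp
    qed
    finally show ?thesis using s eps by (simp add: field_simps)
  qed
  have concl1: "(1 - \<epsilon>) * \<mu>G \<le> m"
  proof -
    have "(1 - \<epsilon>) * \<mu>G \<le> (1 - \<eta> * m) * \<mu>G" using s eps \<mu>G0 by (intro mult_right_mono) auto
    then show ?thesis using up1 by (simp add: algebra_simps)
  qed
  define p where "p = \<eta> * \<mu>G"
  have p0: "p \<ge> 0" using \<eta>0 \<mu>G0 by (simp add: p_def)
  have ps: "p * (1 - \<eta> * m) \<le> \<eta> * m"
    using mult_left_mono[OF up1 \<eta>0] by (simp add: p_def algebra_simps)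
  have p1: "p < 1"
  proof -
    have "p * (17/20) \<le> p * (1 - \<eta> * m)" using s eps p0 by (intro mult_left_mono) auto
    then show ?thesis using ps s eps by linarith
  qed
  have ba: "hinner b a = complex_of_real c0" using ab by (simp add: hinner_commute[of b a])
  have lbF: "\<forall>w\<in>xperp x. (nF * (1/\<mu>G - \<eta>)) * norm w \<le> norm (Lv d F x w)"
  proof
    fix w assume w: "w \<in> xperp x"
    then have wa: "w \<in> xperp a" using xa by simp
    obtain u where u: "u \<in> xperp b" "norm u = norm w"
      "norm (Lv d G b u) / bwnorm d G - sqrt (real D) * (nrmdiff d G F + real D * \<theta>) * norm w \<le> norm (Lv d F a w) / bwnorm d F"
      using pert[OF d1 dD nb na ba c00 th2 th0 _ _ wa, of G F] assms(5-8) bwnorm_pos by blast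
    have uy: "u \<in> xperp y" using u(1) yb by simp
    have "norm u \<le> NG * norm (Lv d G y u)" unfolding NG_def by (rule factA[OF fbG(1,2) y0 d1 uy])
    then have "norm w / \<mu>G \<le> norm (Lv d G b u) / nG"
      using u(2) Lb \<mu>G0 nG0 NG0 by (simp add: \<mu>G_def field_simps)
    then have "norm w / \<mu>G - \<eta> * norm w \<le> norm (Lv d F x w) / nF"
      using u(3) La by (simp add: nF_def nG_def \<eta>_def \<delta>_def nrmdiff_sym)
    then show "(nF * (1/\<mu>G - \<eta>)) * norm w \<le> norm (Lv d F x w)"
      using nF0 by (simp add: field_simps)
  qed
  have cF: "nF * (1/\<mu>G - \<eta>) > 0"
  proof -
    have "\<eta> < 1/\<mu>G" using p1 \<mu>G0 by (simp add: p_def field_simps)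
    then show ?thesis using nF0 by simp
  qed
  have fbF: "onorm (Tm d F x) \<le> 1 / (nF * (1/\<mu>G - \<eta>))"
    using factB[OF card x0 d1 cF lbF] by auto
  have up2: "m * (1 - p) \<le> \<mu>G"
  proof -
    have "m \<le> nF * (1 / (nF * (1/\<mu>G - \<eta>)))"
      using mult_left_mono[OF fbF, of nF] nF0 by (simp add: m_def NF_def)
    also have "\<dots> = \<mu>G / (1 - p)"
    proof -
      have "1/\<mu>G - \<eta> = (1 - p) / \<mu>G" using \<mu>G0 by (simp add: p_def field_simps)
      then show ?thesis using nF0 \<mu>G0 p1 by simp
    qed
    finally show ?thesis using p1 by (simp add: field_simps)
  qed
  have concl2: "m \<le> (1 + \<epsilon>) * \<mu>G"
    by (rule arith2[OF eps _ s p0 ps m0 \<mu>G0 up2 p1]) (use \<eta>0 m0 in simp)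
  show ?thesis using fbG(1) concl1 concl2 by (simp add: muF muG)
qed

end
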